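(* Let $A, B$ be groups, $H\le A$, $K\le B$ subgroups, and $\phi: H\to K$ an isomorphism. The following are equivalent: (i) there exist an $H$-filtration of $A$ and a $K$-filtration of $B$ which are $(H, K, \phi)$-compatible; (ii) for any $a_1, \ldots, a_n\in A\setminus H$, $b_1, \ldots, b_m\in B\setminus K$, $h_1, \ldots, h_l\in H$ and $k_1, \ldots, k_s\in K$ there exist surjective homomorphisms $f^A: A \to G^A$, $f^B: B \to G^B$ onto finite groups such that $f^A(h) \mapsto f^B(\phi(h))$ ($h\in H$) is a well-defined isomorphism $f^A(H)\to f^B(K)$, and 1) $f^A(a_i)\notin f^A(H)$ for all $i=1, \ldots, n$; 2) $f^B(b_i)\notin f^B(K)$ for all $i=1, \ldots, m$; 3) $f^A(h_i)\neq f^A(h_j)$ whenever $h_i\ne h_j$, $1\le i,j\le l$; 4) $f^B(k_i)\neq f^B(k_j)$ whenever $k_i\ne k_j$, $1\le i,j\le s$.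
   Context: A filtration of a group $A$ is a family $\{A_\lambda\}_{\lambda\in\Lambda}$ of normal finite-index subgroups with $\bigcap A_\lambda=\{e\}$; it is an $H$-filtration if $\bigcap_\lambda HA_\lambda=H$. An $H$-filtration $\{A_\lambda\}$ of $A$ and a $K$-filtration $\{B_\lambda\}$ of $B$ with the same index set are $(H,K,\phi)$-compatible if for each $\lambda$ the map $hA_\lambda\mapsto\phi(h)B_\lambda$ is well defined and an isomorphism $HA_\lambda/A_\lambda\to KB_\lambda/B_\lambda$. *)

theory Defs
  imports "HOL-Algebra.Algebra"
begin

text \<open>Intersection of a family of subsets of the carrier, relativised to the carrier
  (so that the empty family has intersection the whole group).\<close>
definition fam_Inter :: "('a, 'c) monoid_scheme \<Rightarrow> 'i set \<Rightarrow> ('i \<Rightarrow> 'a set) \<Rightarrow> 'a set" where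
  "fam_Inter G \<Lambda> F = {x \<in> carrier G. \<forall>l\<in>\<Lambda>. x \<in> F l}"

definition filtration :: "('a, 'c) monoid_scheme \<Rightarrow> 'i set \<Rightarrow> ('i \<Rightarrow> 'a set) \<Rightarrow> bool" where
  "filtration G \<Lambda> F \<longleftrightarrow>
     (\<forall>l\<in>\<Lambda>. F l \<lhd> G \<and> finite (rcosets\<^bsub>G\<^esub> (F l)))
     \<and> fam_Inter G \<Lambda> F = {\<one>\<^bsub>G\<^esub>}"

definition H_filtration :: "('a, 'c) monoid_scheme \<Rightarrow> 'a set \<Rightarrow> 'i set \<Rightarrow> ('i \<Rightarrow> 'a set) \<Rightarrow> bool" where
  "H_filtration G H \<Lambda> F \<longleftrightarrow>
     filtration G \<Lambda> F \<and> fam_Inter G \<Lambda> (\<lambda>l. H <#>\<^bsub>G\<^esub> F l) = H"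

definition compatible ::
  "('a, 'c) monoid_scheme \<Rightarrow> ('b, 'd) monoid_scheme \<Rightarrow> 'a set \<Rightarrow> 'b set \<Rightarrow> ('a \<Rightarrow> 'b)
   \<Rightarrow> 'i set \<Rightarrow> ('i \<Rightarrow> 'a set) \<Rightarrow> ('i \<Rightarrow> 'b set) \<Rightarrow> bool" where
  "compatible A B H K \<phi> \<Lambda> FA FB \<longleftrightarrow>
     (\<forall>l\<in>\<Lambda>. \<exists>\<psi>.
        \<psi> \<in> iso ((A\<lparr>carrier := H <#>\<^bsub>A\<^esub> FA l\<rparr>) Mod (FA l))
               ((B\<lparr>carrier := K <#>\<^bsub>B\<^esub> FB l\<rparr>) Mod (FB l))
        \<and> (\<forall>h\<in>H. \<psi> (FA l #>\<^bsub>A\<^esub> h) = FB l #>\<^bsub>B\<^esub> \<phi> h))"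

end

theory Submission imports Defs begin

lemma coset_eq_iff:
  assumes "group G" "subgroup N G" "x \<in> carrier G" "y \<in> carrier G"
  shows "(N #>\<^bsub>G\<^esub> x = N #>\<^bsub>G\<^esub> y) \<longleftrightarrow> x \<otimes>\<^bsub>G\<^esub> inv\<^bsub>G\<^esub> y \<in> N"
proof
  interpret G: group G by fact
  assume "N #>\<^bsub>G\<^esub> x = N #>\<^bsub>G\<^esub> y"
  then have "x \<in> N #>\<^bsub>G\<^esub> y" using G.rcos_self assms by metis
  then show "x \<otimes>\<^bsub>G\<^esub> inv\<^bsub>G\<^esub> y \<in> N" using subgroup.rcos_module_imp assms by metis
next
  interpret G: group G by fact
  assume "x \<otimes>\<^bsub>G\<^esub> inv\<^bsub>G\<^esub> y \<in> N"
  then have "x \<in> N #>\<^bsub>G\<^esub> y" using subgroup.rcos_module_rev assms by metis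
  then show "N #>\<^bsub>G\<^esub> x = N #>\<^bsub>G\<^esub> y" using G.repr_independence assms by metis
qed

lemma fam_Inter_subgroup:
  assumes "group G" "\<forall>l\<in>S. subgroup (F l) G"
  shows "subgroup (fam_Inter G S F) G"
proof -
  interpret G: group G by fact
  show ?thesis
    by (rule G.subgroupI) (auto simp: fam_Inter_def assms subgroup.m_inv_closed subgroup.m_closed subgroup.one_closed intro!: exI[where x="\<one>\<^bsub>G\<^esub>"])
qed

lemma fam_Inter_normal:
  assumes "group G" "\<forall>l\<in>S. F l \<lhd> G"
  shows "fam_Inter G S F \<lhd> G"
proof -
  interpret G: group G by fact
  have "subgroup (fam_Inter G S F) G"
    using fam_Inter_subgroup assms normal_imp_subgroup by metis
  then show ?thesis
    unfolding G.normal_inv_iff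
    by (auto simp: fam_Inter_def assms normal.inv_op_closed2)
qed

lemma fam_Inter_fin_index:
  assumes "group G" "finite S" "\<forall>l\<in>S. subgroup (F l) G \<and> finite (rcosets\<^bsub>G\<^esub> (F l))"
  shows "finite (rcosets\<^bsub>G\<^esub> (fam_Inter G S F))"
proof -
  interpret G: group G by fact
  let ?N = "fam_Inter G S F"
  have sN: "subgroup ?N G" using fam_Inter_subgroup assms by metis
  have "rcosets\<^bsub>G\<^esub> ?N \<subseteq> (\<lambda>g. {x\<in>carrier G. \<forall>l\<in>S. x \<in> g l}) ` (PiE S (\<lambda>l. rcosets\<^bsub>G\<^esub> (F l)))"
  proof
    fix Y assume "Y \<in> rcosets\<^bsub>G\<^esub> ?N"
    then obtain a where a: "a \<in> carrier G" "Y = ?N #>\<^bsub>G\<^esub> a" unfolding RCOSETS_def by auto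
    have "?N #>\<^bsub>G\<^esub> a = {z\<in>carrier G. \<forall>l\<in>S. z \<in> F l #>\<^bsub>G\<^esub> a}"
    proof (intro equalityI subsetI)
      fix x assume x: "x \<in> ?N #>\<^bsub>G\<^esub> a"
      have xc: "x \<in> carrier G" using subgroup.elemrcos_carrier[OF sN assms(1) a(1) x] .
      have "x \<otimes>\<^bsub>G\<^esub> inv\<^bsub>G\<^esub> a \<in> ?N" using subgroup.rcos_module_imp[OF sN assms(1) a(1) x] .
      then have m: "\<forall>l\<in>S. x \<otimes>\<^bsub>G\<^esub> inv\<^bsub>G\<^esub> a \<in> F l" unfolding fam_Inter_def by blast
      have "\<forall>l\<in>S. x \<in> F l #>\<^bsub>G\<^esub> a"
      proof
        fix l assume l: "l \<in> S"
        have sl: "subgroup (F l) G" using assms(3) l by blast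
        have "x \<otimes>\<^bsub>G\<^esub> inv\<^bsub>G\<^esub> a \<in> F l" using m l by blast
        then show "x \<in> F l #>\<^bsub>G\<^esub> a" using subgroup.rcos_module_rev[OF sl assms(1) a(1) xc] by blast
      qed
      then show "x \<in> {z\<in>carrier G. \<forall>l\<in>S. z \<in> F l #>\<^bsub>G\<^esub> a}" using xc by blast
    next
      fix x assume x: "x \<in> {z\<in>carrier G. \<forall>l\<in>S. z \<in> F l #>\<^bsub>G\<^esub> a}"
      then have xc: "x \<in> carrier G" and xm: "\<forall>l\<in>S. x \<in> F l #>\<^bsub>G\<^esub> a" by blast+
      have "\<forall>l\<in>S. x \<otimes>\<^bsub>G\<^esub> inv\<^bsub>G\<^esub> a \<in> F l"
      proof
        fix l assume l: "l \<in> S"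
        have sl: "subgroup (F l) G" using assms(3) l by blast
        have "x \<in> F l #>\<^bsub>G\<^esub> a" using xm l by blast
        then show "x \<otimes>\<^bsub>G\<^esub> inv\<^bsub>G\<^esub> a \<in> F l" using subgroup.rcos_module_imp[OF sl assms(1) a(1)] by blast
      qed
      moreover have "x \<otimes>\<^bsub>G\<^esub> inv\<^bsub>G\<^esub> a \<in> carrier G" using xc a(1) by simp
      ultimately have "x \<otimes>\<^bsub>G\<^esub> inv\<^bsub>G\<^esub> a \<in> ?N" unfolding fam_Inter_def by blast
      then show "x \<in> ?N #>\<^bsub>G\<^esub> a" using subgroup.rcos_module_rev[OF sN assms(1) a(1) xc] by blast
    qed
    note eq = this
    have "\<forall>l\<in>S. F l #>\<^bsub>G\<^esub> a \<in> rcosets\<^bsub>G\<^esub> (F l)"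
    proof
      fix l assume "l \<in> S"
      then have "F l \<subseteq> carrier G" using assms(3) subgroup.subset by metis
      then show "F l #>\<^bsub>G\<^esub> a \<in> rcosets\<^bsub>G\<^esub> (F l)" using G.rcosetsI a(1) by metis
    qed
    then have r: "restrict (\<lambda>l. F l #>\<^bsub>G\<^esub> a) S \<in> PiE S (\<lambda>l. rcosets\<^bsub>G\<^esub> (F l))"
      by simp
    have "Y = (\<lambda>g. {x\<in>carrier G. \<forall>l\<in>S. x \<in> g l}) (restrict (\<lambda>l. F l #>\<^bsub>G\<^esub> a) S)"
      using a(2) eq by simp
    then show "Y \<in> (\<lambda>g. {x\<in>carrier G. \<forall>l\<in>S. x \<in> g l}) ` (PiE S (\<lambda>l. rcosets\<^bsub>G\<^esub> (F l)))"
      using r by (rule image_eqI)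
  qed
  moreover have "finite (PiE S (\<lambda>l. rcosets\<^bsub>G\<^esub> (F l)))"
    using assms by (intro finite_PiE) auto
  ultimately show ?thesis by (rule finite_subset[OF _ finite_imageI])
qed

lemma phi_facts:
  assumes "group A" "group B" "subgroup H A" "subgroup K B"
    and "\<phi> \<in> iso (A\<lparr>carrier := H\<rparr>) (B\<lparr>carrier := K\<rparr>)"
  shows "\<phi> ` H = K" "inj_on \<phi> H"
    "\<And>x y. x \<in> H \<Longrightarrow> y \<in> H \<Longrightarrow> \<phi> (x \<otimes>\<^bsub>A\<^esub> y) = \<phi> x \<otimes>\<^bsub>B\<^esub> \<phi> y"
    "\<phi> \<one>\<^bsub>A\<^esub> = \<one>\<^bsub>B\<^esub>"
    "\<And>x. x \<in> H \<Longrightarrow> \<phi> (inv\<^bsub>A\<^esub> x) = inv\<^bsub>B\<^esub> (\<phi> x)"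
proof -
  interpret A: group A by fact
  interpret B: group B by fact
  have gh: "group_hom (A\<lparr>carrier := H\<rparr>) (B\<lparr>carrier := K\<rparr>) \<phi>"
    using assms A.subgroup_imp_group B.subgroup_imp_group
    by (intro group_hom.intro group_hom_axioms.intro) (auto simp: iso_def)
  show "\<phi> ` H = K" "inj_on \<phi> H" using assms(5) by (auto simp: iso_def bij_betw_def)
  show "\<And>x y. x \<in> H \<Longrightarrow> y \<in> H \<Longrightarrow> \<phi> (x \<otimes>\<^bsub>A\<^esub> y) = \<phi> x \<otimes>\<^bsub>B\<^esub> \<phi> y"
    using group_hom.hom_mult[OF gh] by simp
  show "\<phi> \<one>\<^bsub>A\<^esub> = \<one>\<^bsub>B\<^esub>"
    using group_hom.hom_one[OF gh] by simp
  show "\<And>x. x \<in> H \<Longrightarrow> \<phi> (inv\<^bsub>A\<^esub> x) = inv\<^bsub>B\<^esub> (\<phi> x)"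
  proof -
    fix x assume x: "x \<in> H"
    have "\<phi> x \<in> K" using x assms(5) by (auto simp: iso_def hom_def)
    then show "\<phi> (inv\<^bsub>A\<^esub> x) = inv\<^bsub>B\<^esub> (\<phi> x)"
      using group_hom.hom_inv[OF gh, of x] x assms(3,4) by simp
  qed
qed

lemma D_to_C:
  assumes grpA: "group A" and grpB: "group B" and sH: "subgroup H A" and sK: "subgroup K B"
    and iso: "\<phi> \<in> iso (A\<lparr>carrier := H\<rparr>) (B\<lparr>carrier := K\<rparr>)"
    and nN: "N \<lhd> A" and nM: "M \<lhd> B"
    and D: "\<forall>h\<in>H. h \<in> N \<longleftrightarrow> \<phi> h \<in> M"
    and c1: "carrier G1 = (\<lambda>h. N #>\<^bsub>A\<^esub> h) ` H" and m1: "monoid.mult G1 = set_mult A"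
    and c2: "carrier G2 = (\<lambda>k. M #>\<^bsub>B\<^esub> k) ` K" and m2: "monoid.mult G2 = set_mult B"
  shows "\<exists>\<psi>. \<psi> \<in> iso G1 G2 \<and> (\<forall>h\<in>H. \<psi> (N #>\<^bsub>A\<^esub> h) = M #>\<^bsub>B\<^esub> \<phi> h)"
proof -
  interpret A: group A by fact
  interpret B: group B by fact
  note pf = phi_facts[OF assms(1-5)]
  have sN: "subgroup N A" and sM: "subgroup M B" using nN nM normal_imp_subgroup by auto
  have HA: "\<And>h. h \<in> H \<Longrightarrow> h \<in> carrier A" using subgroup.mem_carrier[OF sH] by blast
  have KB: "\<And>k. k \<in> K \<Longrightarrow> k \<in> carrier B" using subgroup.mem_carrier[OF sK] by blast
  have phK: "\<And>h. h \<in> H \<Longrightarrow> \<phi> h \<in> K" using pf(1) imageI[of _ H \<phi>] by simp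
  have key: "\<And>h h'. h \<in> H \<Longrightarrow> h' \<in> H \<Longrightarrow>
      (N #>\<^bsub>A\<^esub> h = N #>\<^bsub>A\<^esub> h') \<longleftrightarrow> (M #>\<^bsub>B\<^esub> \<phi> h = M #>\<^bsub>B\<^esub> \<phi> h')"
  proof -
    fix h h' assume h: "h \<in> H" "h' \<in> H"
    have "(N #>\<^bsub>A\<^esub> h = N #>\<^bsub>A\<^esub> h') \<longleftrightarrow> h \<otimes>\<^bsub>A\<^esub> inv\<^bsub>A\<^esub> h' \<in> N"
      using coset_eq_iff[OF grpA sN] h HA by blast
    also have "\<dots> \<longleftrightarrow> \<phi> (h \<otimes>\<^bsub>A\<^esub> inv\<^bsub>A\<^esub> h') \<in> M"
      using D h sH subgroup.m_closed subgroup.m_inv_closed by metis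
    also have "\<phi> (h \<otimes>\<^bsub>A\<^esub> inv\<^bsub>A\<^esub> h') = \<phi> h \<otimes>\<^bsub>B\<^esub> inv\<^bsub>B\<^esub> \<phi> h'"
      using pf(3,5) h sH subgroup.m_inv_closed by metis
    also have "(\<dots> \<in> M) \<longleftrightarrow> (M #>\<^bsub>B\<^esub> \<phi> h = M #>\<^bsub>B\<^esub> \<phi> h')"
      using coset_eq_iff[OF grpB sM] h phK KB by metis
    finally show "(N #>\<^bsub>A\<^esub> h = N #>\<^bsub>A\<^esub> h') \<longleftrightarrow> (M #>\<^bsub>B\<^esub> \<phi> h = M #>\<^bsub>B\<^esub> \<phi> h')" .
  qed
  define \<psi> where "\<psi> = (\<lambda>Y. M #>\<^bsub>B\<^esub> \<phi> (SOME h. h \<in> H \<and> Y = N #>\<^bsub>A\<^esub> h))"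
  have psi: "\<And>h. h \<in> H \<Longrightarrow> \<psi> (N #>\<^bsub>A\<^esub> h) = M #>\<^bsub>B\<^esub> \<phi> h"
  proof -
    fix h assume h: "h \<in> H"
    have "\<exists>h'. h' \<in> H \<and> N #>\<^bsub>A\<^esub> h = N #>\<^bsub>A\<^esub> h'" using h by blast
    then have "(SOME h'. h' \<in> H \<and> N #>\<^bsub>A\<^esub> h = N #>\<^bsub>A\<^esub> h') \<in> H \<and>
       N #>\<^bsub>A\<^esub> h = N #>\<^bsub>A\<^esub> (SOME h'. h' \<in> H \<and> N #>\<^bsub>A\<^esub> h = N #>\<^bsub>A\<^esub> h')"
      by (rule someI_ex)
    then show "\<psi> (N #>\<^bsub>A\<^esub> h) = M #>\<^bsub>B\<^esub> \<phi> h"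
      unfolding \<psi>_def using key h by metis
  qed
  have hom: "\<psi> \<in> hom G1 G2"
  proof (rule homI)
    fix Y assume "Y \<in> carrier G1"
    then show "\<psi> Y \<in> carrier G2" using c1 c2 psi phK by auto
  next
    fix Y Z assume "Y \<in> carrier G1" "Z \<in> carrier G1"
    then obtain h1 h2 where h: "h1 \<in> H" "h2 \<in> H" "Y = N #>\<^bsub>A\<^esub> h1" "Z = N #>\<^bsub>A\<^esub> h2"
      using c1 by auto
    have "Y \<otimes>\<^bsub>G1\<^esub> Z = N #>\<^bsub>A\<^esub> (h1 \<otimes>\<^bsub>A\<^esub> h2)"
      using m1 h normal.rcos_sum[OF nN] HA by simp
    then have "\<psi> (Y \<otimes>\<^bsub>G1\<^esub> Z) = M #>\<^bsub>B\<^esub> (\<phi> h1 \<otimes>\<^bsub>B\<^esub> \<phi> h2)"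
      using psi pf(3) h sH subgroup.m_closed by metis
    also have "\<dots> = \<psi> Y \<otimes>\<^bsub>G2\<^esub> \<psi> Z"
      using m2 h psi normal.rcos_sum[OF nM] KB phK by simp
    finally show "\<psi> (Y \<otimes>\<^bsub>G1\<^esub> Z) = \<psi> Y \<otimes>\<^bsub>G2\<^esub> \<psi> Z" .
  qed
  have bij: "bij_betw \<psi> (carrier G1) (carrier G2)"
  proof (rule bij_betw_imageI)
    show "inj_on \<psi> (carrier G1)"
      unfolding c1 inj_on_def using psi key by auto
    have "\<psi> ` carrier G1 = (\<lambda>h. M #>\<^bsub>B\<^esub> \<phi> h) ` H" using c1 psi by (auto simp: image_iff)
    also have "\<dots> = (\<lambda>k. M #>\<^bsub>B\<^esub> k) ` (\<phi> ` H)" by (simp add: image_image)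
    finally show "\<psi> ` carrier G1 = carrier G2" using c2 pf(1) by simp
  qed
  show ?thesis using hom bij psi unfolding iso_def by blast
qed


lemma r_coset_carrier_upd: "r_coset (G\<lparr>carrier := Z\<rparr>) = r_coset G"
  by (intro ext) (simp add: r_coset_def)

lemma set_mult_carrier_upd: "set_mult (G\<lparr>carrier := Z\<rparr>) = set_mult G"
  by (intro ext) (simp add: set_mult_def)

lemma HN_mem:
  assumes "group A" "subgroup H A" "subgroup N A" "h \<in> H"
  shows "h \<in> H <#>\<^bsub>A\<^esub> N"
proof -
  interpret A: group A by fact
  have "h = h \<otimes>\<^bsub>A\<^esub> \<one>\<^bsub>A\<^esub>" using assms subgroup.mem_carrier by fastforce
  then show ?thesis using assms subgroup.one_closed unfolding set_mult_def by fastforce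
qed

lemma rcosets_HN:
  assumes "group A" "subgroup H A" "N \<lhd> A"
  shows "rcosets\<^bsub>A\<lparr>carrier := H <#>\<^bsub>A\<^esub> N\<rparr>\<^esub> N = (\<lambda>h. N #>\<^bsub>A\<^esub> h) ` H"
proof -
  interpret A: group A by fact
  have sN: "subgroup N A" using assms normal_imp_subgroup by auto
  have "(\<Union>a\<in>H <#>\<^bsub>A\<^esub> N. {N #>\<^bsub>A\<^esub> a}) = (\<lambda>h. N #>\<^bsub>A\<^esub> h) ` H"
  proof (intro equalityI subsetI)
    fix Y assume "Y \<in> (\<Union>a\<in>H <#>\<^bsub>A\<^esub> N. {N #>\<^bsub>A\<^esub> a})"
    then obtain h n where hn: "h \<in> H" "n \<in> N" "Y = N #>\<^bsub>A\<^esub> (h \<otimes>\<^bsub>A\<^esub> n)"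
      unfolding set_mult_def by auto
    have hc: "h \<in> carrier A" and nc: "n \<in> carrier A"
      using hn assms(2) sN subgroup.mem_carrier by metis+
    have "(h \<otimes>\<^bsub>A\<^esub> n) \<otimes>\<^bsub>A\<^esub> inv\<^bsub>A\<^esub> h \<in> N"
      using normal.inv_op_closed2[OF assms(3) hc hn(2)] .
    then have "N #>\<^bsub>A\<^esub> (h \<otimes>\<^bsub>A\<^esub> n) = N #>\<^bsub>A\<^esub> h"
      using coset_eq_iff[OF assms(1) sN] hc nc by simp
    then show "Y \<in> (\<lambda>h. N #>\<^bsub>A\<^esub> h) ` H" using hn by auto
  next
    fix Y assume "Y \<in> (\<lambda>h. N #>\<^bsub>A\<^esub> h) ` H"
    then show "Y \<in> (\<Union>a\<in>H <#>\<^bsub>A\<^esub> N. {N #>\<^bsub>A\<^esub> a})"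
      using HN_mem[OF assms(1,2) sN] by auto
  qed
  then show ?thesis unfolding RCOSETS_def by (simp add: r_coset_carrier_upd)
qed

lemma C_to_D:
  assumes grpA: "group A" and grpB: "group B" and sH: "subgroup H A" and sK: "subgroup K B"
    and iso: "\<phi> \<in> iso (A\<lparr>carrier := H\<rparr>) (B\<lparr>carrier := K\<rparr>)"
    and nN: "N \<lhd> A" and nM: "M \<lhd> B"
    and psi: "\<psi> \<in> iso ((A\<lparr>carrier := H <#>\<^bsub>A\<^esub> N\<rparr>) Mod N) ((B\<lparr>carrier := K <#>\<^bsub>B\<^esub> M\<rparr>) Mod M)"
    and psiv: "\<forall>h\<in>H. \<psi> (N #>\<^bsub>A\<^esub> h) = M #>\<^bsub>B\<^esub> \<phi> h"
  shows "\<forall>h\<in>H. h \<in> N \<longleftrightarrow> \<phi> h \<in> M"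
proof
  interpret A: group A by fact
  interpret B: group B by fact
  note pf = phi_facts[OF assms(1-5)]
  have sN: "subgroup N A" and sM: "subgroup M B" using nN nM normal_imp_subgroup by auto
  fix h assume h: "h \<in> H"
  have hc: "h \<in> carrier A" using subgroup.mem_carrier[OF sH h] .
  have phK0: "\<phi> h \<in> K" using pf(1) imageI[OF h, of \<phi>] by simp
  have ph: "\<phi> h \<in> carrier B" using subgroup.mem_carrier[OF sK phK0] .
  have o1: "\<one>\<^bsub>A\<^esub> \<in> H" using subgroup.one_closed[OF sH] .
  have cr: "carrier ((A\<lparr>carrier := H <#>\<^bsub>A\<^esub> N\<rparr>) Mod N) = (\<lambda>h. N #>\<^bsub>A\<^esub> h) ` H"
    using rcosets_HN[OF grpA sH nN] by (simp add: FactGroup_def)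
  have "inj_on \<psi> (carrier ((A\<lparr>carrier := H <#>\<^bsub>A\<^esub> N\<rparr>) Mod N))"
    using psi unfolding iso_def bij_betw_def by blast
  then have inj: "inj_on \<psi> ((\<lambda>h. N #>\<^bsub>A\<^esub> h) ` H)" by (simp only: cr)
  have m1: "N #>\<^bsub>A\<^esub> h \<in> (\<lambda>h. N #>\<^bsub>A\<^esub> h) ` H" using h by (rule imageI)
  have m2: "N #>\<^bsub>A\<^esub> \<one>\<^bsub>A\<^esub> \<in> (\<lambda>h. N #>\<^bsub>A\<^esub> h) ` H" using o1 by (rule imageI)
  have "h \<in> N \<longleftrightarrow> N #>\<^bsub>A\<^esub> h = N #>\<^bsub>A\<^esub> \<one>\<^bsub>A\<^esub>"
    using coset_eq_iff[OF grpA sN hc] hc by simp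
  also have "\<dots> \<longleftrightarrow> \<psi> (N #>\<^bsub>A\<^esub> h) = \<psi> (N #>\<^bsub>A\<^esub> \<one>\<^bsub>A\<^esub>)"
    using inj_on_eq_iff[OF inj m1 m2] by simp
  also have "\<dots> \<longleftrightarrow> M #>\<^bsub>B\<^esub> \<phi> h = M #>\<^bsub>B\<^esub> \<one>\<^bsub>B\<^esub>"
    using psiv h o1 pf(4) by simp
  also have "\<dots> \<longleftrightarrow> \<phi> h \<in> M"
    using coset_eq_iff[OF grpB sM ph] ph by simp
  finally show "h \<in> N \<longleftrightarrow> \<phi> h \<in> M" .
qed


lemma not_in_img:
  assumes "group G" "subgroup H G" "P \<lhd> G" "subgroup N G" "N \<subseteq> P" "a \<in> carrier G"
    and "a \<notin> H <#>\<^bsub>G\<^esub> P"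
  shows "N #>\<^bsub>G\<^esub> a \<notin> (\<lambda>h. N #>\<^bsub>G\<^esub> h) ` H"
proof
  interpret G: group G by fact
  assume "N #>\<^bsub>G\<^esub> a \<in> (\<lambda>h. N #>\<^bsub>G\<^esub> h) ` H"
  then obtain h where h: "h \<in> H" "N #>\<^bsub>G\<^esub> a = N #>\<^bsub>G\<^esub> h" by auto
  have hc: "h \<in> carrier G" using h assms(2) subgroup.mem_carrier by metis
  have "a \<otimes>\<^bsub>G\<^esub> inv\<^bsub>G\<^esub> h \<in> P"
    using coset_eq_iff[OF assms(1,4) assms(6) hc] h assms(5) by blast
  then have "inv\<^bsub>G\<^esub> h \<otimes>\<^bsub>G\<^esub> (a \<otimes>\<^bsub>G\<^esub> inv\<^bsub>G\<^esub> h) \<otimes>\<^bsub>G\<^esub> h \<in> P"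
    using normal.inv_op_closed1[OF assms(3) hc] by blast
  also have "inv\<^bsub>G\<^esub> h \<otimes>\<^bsub>G\<^esub> (a \<otimes>\<^bsub>G\<^esub> inv\<^bsub>G\<^esub> h) \<otimes>\<^bsub>G\<^esub> h = inv\<^bsub>G\<^esub> h \<otimes>\<^bsub>G\<^esub> a"
    using hc assms(6) by (simp add: G.m_assoc)
  finally have p: "inv\<^bsub>G\<^esub> h \<otimes>\<^bsub>G\<^esub> a \<in> P" .
  have "a = h \<otimes>\<^bsub>G\<^esub> (inv\<^bsub>G\<^esub> h \<otimes>\<^bsub>G\<^esub> a)"
    using hc assms(6) by (simp add: G.m_assoc[symmetric])
  then have "a \<in> H <#>\<^bsub>G\<^esub> P" using h(1) p unfolding set_mult_def by blast
  then show False using assms(7) by blast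
qed

lemma ker_facts:
  assumes "group G" "group GA" "f \<in> hom G GA" "f ` carrier G = carrier GA" "finite (carrier GA)"
  shows "kernel G GA f \<lhd> G" "finite (rcosets\<^bsub>G\<^esub> (kernel G GA f))"
proof -
  have gh: "group_hom G GA f" using assms by (intro group_hom.intro group_hom_axioms.intro)
  show "kernel G GA f \<lhd> G" using group_hom.normal_kernel[OF gh] .
  have "bij_betw (\<lambda>Y. the_elem (f ` Y)) (carrier (G Mod kernel G GA f)) (carrier GA)"
    using group_hom.FactGroup_iso_set[OF gh assms(4)] unfolding iso_def by blast
  then show "finite (rcosets\<^bsub>G\<^esub> (kernel G GA f))"
    using assms(5) bij_betw_finite unfolding FactGroup_def by fastforce
qed

lemma ker_notin_HN:
  assumes "group G" "group GA" "f \<in> hom G GA" "subgroup H G" "x \<in> carrier G" "f x \<notin> f ` H"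
  shows "x \<notin> H <#>\<^bsub>G\<^esub> kernel G GA f"
proof
  have gh: "group_hom G GA f" using assms by (intro group_hom.intro group_hom_axioms.intro)
  assume "x \<in> H <#>\<^bsub>G\<^esub> kernel G GA f"
  then obtain h n where hn: "h \<in> H" "n \<in> kernel G GA f" "x = h \<otimes>\<^bsub>G\<^esub> n"
    unfolding set_mult_def by auto
  have hc: "h \<in> carrier G" using hn assms(4) subgroup.mem_carrier by metis
  have "f x = f h \<otimes>\<^bsub>GA\<^esub> f n" using hn hc group_hom.hom_mult[OF gh] unfolding kernel_def by auto
  also have "\<dots> = f h" using hn hc assms(3) group.is_monoid[OF assms(2)] unfolding kernel_def
    by (auto simp: hom_def intro: monoid.r_one)
  finally show False using hn(1) assms(6) by blast
qed

lemma ker_D: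
  assumes grpA: "group A" and grpB: "group B" and sH: "subgroup H A" and sK: "subgroup K B"
    and iso: "\<phi> \<in> iso (A\<lparr>carrier := H\<rparr>) (B\<lparr>carrier := K\<rparr>)"
    and "group GA" "group GB" "fA \<in> hom A GA" "fB \<in> hom B GB"
    and psi: "\<psi> \<in> iso (GA\<lparr>carrier := fA ` H\<rparr>) (GB\<lparr>carrier := fB ` K\<rparr>)"
    and psiv: "\<forall>h\<in>H. \<psi> (fA h) = fB (\<phi> h)"
  shows "\<forall>h\<in>H. h \<in> kernel A GA fA \<longleftrightarrow> \<phi> h \<in> kernel B GB fB"
proof
  note pf = phi_facts[OF assms(1-5)]
  have ghA: "group_hom A GA fA" using assms by (intro group_hom.intro group_hom_axioms.intro)
  have ghB: "group_hom B GB fB" using assms by (intro group_hom.intro group_hom_axioms.intro)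
  fix h assume h: "h \<in> H"
  have hc: "h \<in> carrier A" using subgroup.mem_carrier[OF sH h] .
  have phK0: "\<phi> h \<in> K" using pf(1) imageI[OF h, of \<phi>] by simp
  have ph: "\<phi> h \<in> carrier B" using subgroup.mem_carrier[OF sK phK0] .
  have o1: "\<one>\<^bsub>A\<^esub> \<in> H" using subgroup.one_closed[OF sH] .
  have inj: "inj_on \<psi> (fA ` H)" using psi unfolding iso_def bij_betw_def by simp
  have "h \<in> kernel A GA fA \<longleftrightarrow> fA h = fA \<one>\<^bsub>A\<^esub>"
    using hc group_hom.hom_one[OF ghA] unfolding kernel_def by simp
  also have "\<dots> \<longleftrightarrow> \<psi> (fA h) = \<psi> (fA \<one>\<^bsub>A\<^esub>)"
    using inj h o1 by (auto dest: inj_onD)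
  also have "\<dots> \<longleftrightarrow> fB (\<phi> h) = fB \<one>\<^bsub>B\<^esub>"
    using psiv h o1 pf(4) by metis
  also have "\<dots> \<longleftrightarrow> \<phi> h \<in> kernel B GB fB"
    using ph group_hom.hom_one[OF ghB] unfolding kernel_def by simp
  finally show "h \<in> kernel A GA fA \<longleftrightarrow> \<phi> h \<in> kernel B GB fB" .
qed

lemma finite_choice_set:
  assumes "finite Z" "\<forall>x\<in>Z. \<exists>l\<in>L. P x l"
  shows "\<exists>S\<subseteq>L. finite S \<and> (\<forall>x\<in>Z. \<exists>l\<in>S. P x l)"
proof -
  have "\<forall>x\<in>Z. \<exists>l. l \<in> L \<and> P x l" using assms(2) by blast
  then obtain f where "\<forall>x\<in>Z. f x \<in> L \<and> P x (f x)" using bchoice by metis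
  then show ?thesis using assms(1) by (intro exI[where x="f ` Z"]) auto
qed

lemma ker_notin1:
  assumes "group G" "group GA" "f \<in> hom G GA" "x \<in> carrier G" "f x \<noteq> f \<one>\<^bsub>G\<^esub>"
  shows "x \<notin> kernel G GA f"
proof -
  have gh: "group_hom G GA f" using assms by (intro group_hom.intro group_hom_axioms.intro)
  show ?thesis using assms(5) group_hom.hom_one[OF gh] unfolding kernel_def by simp
qed

lemma N_sub_HN:
  assumes "group G" "subgroup H G" "N \<subseteq> carrier G" "x \<in> N"
  shows "x \<in> H <#>\<^bsub>G\<^esub> N"
proof -
  interpret G: group G by fact
  have "x = \<one>\<^bsub>G\<^esub> \<otimes>\<^bsub>G\<^esub> x" using assms(3,4) by auto
  moreover have "\<one>\<^bsub>G\<^esub> \<in> H" using subgroup.one_closed[OF assms(2)] .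
  ultimately show ?thesis using assms(4) unfolding set_mult_def by blast
qed

theorem proposition3p2:
  fixes A :: "'a monoid" and B :: "'b monoid"
    and H :: "'a set" and K :: "'b set" and \<phi> :: "'a \<Rightarrow> 'b"
  assumes "group A" and "group B"
    and "subgroup H A" and "subgroup K B"
    and "\<phi> \<in> iso (A\<lparr>carrier := H\<rparr>) (B\<lparr>carrier := K\<rparr>)"
  shows "(\<exists>(\<Lambda> :: ('a set \<times> 'b set) set) FA FB.
            H_filtration A H \<Lambda> FA \<and> H_filtration B K \<Lambda> FB
            \<and> compatible A B H K \<phi> \<Lambda> FA FB)
     \<longleftrightarrow>
     (\<forall>as bs hs ks.
        set as \<subseteq> carrier A - H \<and> set bs \<subseteq> carrier B - K
        \<and> set hs \<subseteq> H \<and> set ks \<subseteq> K \<longrightarrow>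
        (\<exists>(GA :: 'a set monoid) (GB :: 'b set monoid) fA fB.
           group GA \<and> group GB \<and> finite (carrier GA) \<and> finite (carrier GB)
           \<and> fA \<in> hom A GA \<and> fA ` carrier A = carrier GA
           \<and> fB \<in> hom B GB \<and> fB ` carrier B = carrier GB
           \<and> (\<exists>\<psi>. \<psi> \<in> iso (GA\<lparr>carrier := fA ` H\<rparr>) (GB\<lparr>carrier := fB ` K\<rparr>)
                 \<and> (\<forall>h\<in>H. \<psi> (fA h) = fB (\<phi> h)))
           \<and> (\<forall>a\<in>set as. fA a \<notin> fA ` H)
           \<and> (\<forall>b\<in>set bs. fB b \<notin> fB ` K)
           \<and> (\<forall>x\<in>set hs. \<forall>y\<in>set hs. x \<noteq> y \<longrightarrow> fA x \<noteq> fA y)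
           \<and> (\<forall>x\<in>set ks. \<forall>y\<in>set ks. x \<noteq> y \<longrightarrow> fB x \<noteq> fB y)))"
proof -
  interpret A: group A by fact
  interpret B: group B by fact
  note grpA = assms(1) and grpB = assms(2) and sH = assms(3) and sK = assms(4) and iso = assms(5)
  note pf = phi_facts[OF assms(1-5)]
  have HA: "\<And>h. h \<in> H \<Longrightarrow> h \<in> carrier A" using subgroup.mem_carrier[OF sH] by blast
  have KB: "\<And>k. k \<in> K \<Longrightarrow> k \<in> carrier B" using subgroup.mem_carrier[OF sK] by blast
  have neq1A: "\<And>x y. x \<in> carrier A \<Longrightarrow> y \<in> carrier A \<Longrightarrow> x \<noteq> y \<Longrightarrow> x \<otimes>\<^bsub>A\<^esub> inv\<^bsub>A\<^esub> y \<noteq> \<one>\<^bsub>A\<^esub>"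
    using A.inv_solve_right'[of "\<one>\<^bsub>A\<^esub>"] by simp
  have neq1B: "\<And>x y. x \<in> carrier B \<Longrightarrow> y \<in> carrier B \<Longrightarrow> x \<noteq> y \<Longrightarrow> x \<otimes>\<^bsub>B\<^esub> inv\<^bsub>B\<^esub> y \<noteq> \<one>\<^bsub>B\<^esub>"
    using B.inv_solve_right'[of "\<one>\<^bsub>B\<^esub>"] by simp
  show ?thesis
  proof (rule iffI, goal_cases)
    case 1
    then obtain L :: "('a set \<times> 'b set) set" and FA FB where
      hfA: "H_filtration A H L FA" and hfB: "H_filtration B K L FB" and comp: "compatible A B H K \<phi> L FA FB"
      by blast
    have nFA: "\<forall>l\<in>L. FA l \<lhd> A \<and> finite (rcosets\<^bsub>A\<^esub> (FA l))"
      using hfA unfolding H_filtration_def filtration_def by (elim conjE) assumption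
    have iA: "fam_Inter A L FA = {\<one>\<^bsub>A\<^esub>}"
      using hfA unfolding H_filtration_def filtration_def by (elim conjE) assumption
    have hA: "fam_Inter A L (\<lambda>l. H <#>\<^bsub>A\<^esub> FA l) = H"
      using hfA unfolding H_filtration_def filtration_def by (elim conjE) assumption
    have nFB: "\<forall>l\<in>L. FB l \<lhd> B \<and> finite (rcosets\<^bsub>B\<^esub> (FB l))"
      using hfB unfolding H_filtration_def filtration_def by (elim conjE) assumption
    have iB: "fam_Inter B L FB = {\<one>\<^bsub>B\<^esub>}"
      using hfB unfolding H_filtration_def filtration_def by (elim conjE) assumption
    have hB: "fam_Inter B L (\<lambda>l. K <#>\<^bsub>B\<^esub> FB l) = K"
      using hfB unfolding H_filtration_def filtration_def by (elim conjE) assumption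
    have DL: "\<forall>l\<in>L. \<forall>h\<in>H. h \<in> FA l \<longleftrightarrow> \<phi> h \<in> FB l"
    proof
      fix l assume l: "l \<in> L"
      have nA: "FA l \<lhd> A" and nB: "FB l \<lhd> B" using nFA nFB l by blast+
      obtain \<psi> where p1:
        "\<psi> \<in> iso ((A\<lparr>carrier := H <#>\<^bsub>A\<^esub> FA l\<rparr>) Mod (FA l))
               ((B\<lparr>carrier := K <#>\<^bsub>B\<^esub> FB l\<rparr>) Mod (FB l))"
        and p2: "\<forall>h\<in>H. \<psi> (FA l #>\<^bsub>A\<^esub> h) = FB l #>\<^bsub>B\<^esub> \<phi> h"
        using comp l unfolding compatible_def by blast
      show "\<forall>h\<in>H. h \<in> FA l \<longleftrightarrow> \<phi> h \<in> FB l"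
        using C_to_D[OF assms(1-5) nA nB p1 p2] .
    qed
    show ?case
    proof (intro allI impI, goal_cases)
      case (1 as bs hs ks)
      then have lists: "set as \<subseteq> carrier A - H \<and> set bs \<subseteq> carrier B - K \<and> set hs \<subseteq> H \<and> set ks \<subseteq> K" by blast
      have "\<forall>a\<in>set as. \<exists>l\<in>L. a \<notin> H <#>\<^bsub>A\<^esub> FA l"
      proof
        fix a assume "a \<in> set as"
        then have c: "a \<in> carrier A" and "a \<notin> H" using lists by auto
        then have "a \<notin> fam_Inter A L (\<lambda>l. H <#>\<^bsub>A\<^esub> FA l)" using hA by blast
        then show "\<exists>l\<in>L. a \<notin> H <#>\<^bsub>A\<^esub> FA l" using c unfolding fam_Inter_def by blast
      qed
      from finite_choice_set[OF finite_set this] obtain S1 where S1: "S1 \<subseteq> L" "finite S1" "\<forall>a\<in>set as. \<exists>l\<in>S1. a \<notin> H <#>\<^bsub>A\<^esub> FA l"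
        by blast
      have "\<forall>b\<in>set bs. \<exists>l\<in>L. b \<notin> K <#>\<^bsub>B\<^esub> FB l"
      proof
        fix b assume "b \<in> set bs"
        then have c: "b \<in> carrier B" and "b \<notin> K" using lists by auto
        then have "b \<notin> fam_Inter B L (\<lambda>l. K <#>\<^bsub>B\<^esub> FB l)" using hB by blast
        then show "\<exists>l\<in>L. b \<notin> K <#>\<^bsub>B\<^esub> FB l" using c unfolding fam_Inter_def by blast
      qed
      from finite_choice_set[OF finite_set this] obtain S2 where S2: "S2 \<subseteq> L" "finite S2" "\<forall>b\<in>set bs. \<exists>l\<in>S2. b \<notin> K <#>\<^bsub>B\<^esub> FB l"
        by blast
      let ?Z3 = "{p \<in> set hs \<times> set hs. fst p \<noteq> snd p}"
      have fin3: "finite ?Z3" by (rule finite_subset[of _ "set hs \<times> set hs"]) auto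
      have "\<forall>p\<in>?Z3. \<exists>l\<in>L. fst p \<otimes>\<^bsub>A\<^esub> inv\<^bsub>A\<^esub> snd p \<notin> FA l"
      proof
        fix p assume p: "p \<in> ?Z3"
        then have c: "fst p \<in> carrier A" "snd p \<in> carrier A" using lists HA by auto
        then have "fst p \<otimes>\<^bsub>A\<^esub> inv\<^bsub>A\<^esub> snd p \<noteq> \<one>\<^bsub>A\<^esub>" using neq1A p by blast
        then have "fst p \<otimes>\<^bsub>A\<^esub> inv\<^bsub>A\<^esub> snd p \<notin> fam_Inter A L FA"
          using iA by simp
        then show "\<exists>l\<in>L. fst p \<otimes>\<^bsub>A\<^esub> inv\<^bsub>A\<^esub> snd p \<notin> FA l"
          using c unfolding fam_Inter_def by auto
      qed
      from finite_choice_set[OF fin3 this] obtain S3 where S3: "S3 \<subseteq> L" "finite S3" "\<forall>p\<in>?Z3. \<exists>l\<in>S3. fst p \<otimes>\<^bsub>A\<^esub> inv\<^bsub>A\<^esub> snd p \<notin> FA l"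
        by blast
      let ?Z4 = "{p \<in> set ks \<times> set ks. fst p \<noteq> snd p}"
      have fin4: "finite ?Z4" by (rule finite_subset[of _ "set ks \<times> set ks"]) auto
      have "\<forall>p\<in>?Z4. \<exists>l\<in>L. fst p \<otimes>\<^bsub>B\<^esub> inv\<^bsub>B\<^esub> snd p \<notin> FB l"
      proof
        fix p assume p: "p \<in> ?Z4"
        then have c: "fst p \<in> carrier B" "snd p \<in> carrier B" using lists KB by auto
        then have "fst p \<otimes>\<^bsub>B\<^esub> inv\<^bsub>B\<^esub> snd p \<noteq> \<one>\<^bsub>B\<^esub>" using neq1B p by blast
        then have "fst p \<otimes>\<^bsub>B\<^esub> inv\<^bsub>B\<^esub> snd p \<notin> fam_Inter B L FB"
          using iB by simp
        then show "\<exists>l\<in>L. fst p \<otimes>\<^bsub>B\<^esub> inv\<^bsub>B\<^esub> snd p \<notin> FB l"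
          using c unfolding fam_Inter_def by auto
      qed
      from finite_choice_set[OF fin4 this] obtain S4 where S4: "S4 \<subseteq> L" "finite S4" "\<forall>p\<in>?Z4. \<exists>l\<in>S4. fst p \<otimes>\<^bsub>B\<^esub> inv\<^bsub>B\<^esub> snd p \<notin> FB l"
        by blast
      define S where "S = S1 \<union> S2 \<union> S3 \<union> S4"
      have SL: "S \<subseteq> L" unfolding S_def using S1(1) S2(1) S3(1) S4(1) by (simp only: Un_subset_iff)
      have finS: "finite S" unfolding S_def using S1(2) S2(2) S3(2) S4(2) by (simp only: finite_Un)
      define N where "N = fam_Inter A S FA"
      define M where "M = fam_Inter B S FB"
      have nSA: "\<forall>l\<in>S. FA l \<lhd> A \<and> finite (rcosets\<^bsub>A\<^esub> (FA l))" using nFA SL by blast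
      have nSB: "\<forall>l\<in>S. FB l \<lhd> B \<and> finite (rcosets\<^bsub>B\<^esub> (FB l))" using nFB SL by blast
      have nN: "N \<lhd> A" unfolding N_def by (rule fam_Inter_normal[OF grpA]) (use nSA in blast)
      have nM: "M \<lhd> B" unfolding M_def by (rule fam_Inter_normal[OF grpB]) (use nSB in blast)
      have sN: "subgroup N A" and sM: "subgroup M B" using nN nM normal_imp_subgroup by auto
      have fN: "finite (rcosets\<^bsub>A\<^esub> N)" unfolding N_def
        by (rule fam_Inter_fin_index[OF grpA finS]) (use nSA normal_imp_subgroup in blast)
      have fM: "finite (rcosets\<^bsub>B\<^esub> M)" unfolding M_def
        by (rule fam_Inter_fin_index[OF grpB finS]) (use nSB normal_imp_subgroup in blast)
      have NS: "\<And>l. l \<in> S \<Longrightarrow> N \<subseteq> FA l" unfolding N_def fam_Inter_def by auto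
      have MS: "\<And>l. l \<in> S \<Longrightarrow> M \<subseteq> FB l" unfolding M_def fam_Inter_def by auto
      have D: "\<forall>h\<in>H. h \<in> N \<longleftrightarrow> \<phi> h \<in> M"
      proof
        fix h assume h: "h \<in> H"
        have pc: "\<phi> h \<in> carrier B" using KB pf(1) imageI[OF h, of \<phi>] by simp
        have e1: "h \<in> N \<longleftrightarrow> (\<forall>l\<in>S. h \<in> FA l)" unfolding N_def fam_Inter_def using HA[OF h] by simp
        have e2: "\<phi> h \<in> M \<longleftrightarrow> (\<forall>l\<in>S. \<phi> h \<in> FB l)" unfolding M_def fam_Inter_def using pc by simp
        have "\<forall>l\<in>S. h \<in> FA l \<longleftrightarrow> \<phi> h \<in> FB l" using DL SL h by blast
        then show "h \<in> N \<longleftrightarrow> \<phi> h \<in> M" using e1 e2 by blast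
      qed
      have "\<exists>\<psi>. \<psi> \<in> iso ((A Mod N)\<lparr>carrier := (\<lambda>a. N #>\<^bsub>A\<^esub> a) ` H\<rparr>)
                          ((B Mod M)\<lparr>carrier := (\<lambda>b. M #>\<^bsub>B\<^esub> b) ` K\<rparr>)
          \<and> (\<forall>h\<in>H. \<psi> (N #>\<^bsub>A\<^esub> h) = M #>\<^bsub>B\<^esub> \<phi> h)"
        by (rule D_to_C[OF assms(1-5) nN nM D]) (simp_all add: FactGroup_def)
      then obtain \<psi> where psi: "\<psi> \<in> iso ((A Mod N)\<lparr>carrier := (\<lambda>a. N #>\<^bsub>A\<^esub> a) ` H\<rparr>)
                          ((B Mod M)\<lparr>carrier := (\<lambda>b. M #>\<^bsub>B\<^esub> b) ` K\<rparr>)"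
          and psiv: "\<forall>h\<in>H. \<psi> (N #>\<^bsub>A\<^esub> h) = M #>\<^bsub>B\<^esub> \<phi> h"
        by blast
      show ?case
      proof (intro exI[where x="A Mod N"] exI[where x="B Mod M"]
                   exI[where x="\<lambda>a. N #>\<^bsub>A\<^esub> a"] exI[where x="\<lambda>b. M #>\<^bsub>B\<^esub> b"] conjI)
        show "group (A Mod N)" using normal.factorgroup_is_group[OF nN] .
        show "group (B Mod M)" using normal.factorgroup_is_group[OF nM] .
        show "finite (carrier (A Mod N))" using fN by (simp add: FactGroup_def)
        show "finite (carrier (B Mod M))" using fM by (simp add: FactGroup_def)
        show "(\<lambda>a. N #>\<^bsub>A\<^esub> a) \<in> hom A (A Mod N)" using normal.r_coset_hom_Mod[OF nN] .
        show "(\<lambda>b. M #>\<^bsub>B\<^esub> b) \<in> hom B (B Mod M)" using normal.r_coset_hom_Mod[OF nM] .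
        show "(\<lambda>a. N #>\<^bsub>A\<^esub> a) ` carrier A = carrier (A Mod N)"
          by (auto simp: FactGroup_def RCOSETS_def)
        show "(\<lambda>b. M #>\<^bsub>B\<^esub> b) ` carrier B = carrier (B Mod M)"
          by (auto simp: FactGroup_def RCOSETS_def)
        show "\<exists>\<psi>. \<psi> \<in> iso ((A Mod N)\<lparr>carrier := (\<lambda>a. N #>\<^bsub>A\<^esub> a) ` H\<rparr>)
                          ((B Mod M)\<lparr>carrier := (\<lambda>b. M #>\<^bsub>B\<^esub> b) ` K\<rparr>)
                 \<and> (\<forall>h\<in>H. \<psi> (N #>\<^bsub>A\<^esub> h) = M #>\<^bsub>B\<^esub> \<phi> h)"
          using psi psiv by blast
        show "\<forall>a\<in>set as. N #>\<^bsub>A\<^esub> a \<notin> (\<lambda>a. N #>\<^bsub>A\<^esub> a) ` H"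
        proof
          fix a assume a: "a \<in> set as"
          then obtain l where l: "l \<in> S" "a \<notin> H <#>\<^bsub>A\<^esub> FA l" using S1 unfolding S_def by blast
          show "N #>\<^bsub>A\<^esub> a \<notin> (\<lambda>a. N #>\<^bsub>A\<^esub> a) ` H"
            using not_in_img[OF grpA sH _ sN NS[OF l(1)] _ l(2)] nFA SL l a lists by blast
        qed
        show "\<forall>b\<in>set bs. M #>\<^bsub>B\<^esub> b \<notin> (\<lambda>b. M #>\<^bsub>B\<^esub> b) ` K"
        proof
          fix b assume b: "b \<in> set bs"
          then obtain l where l: "l \<in> S" "b \<notin> K <#>\<^bsub>B\<^esub> FB l" using S2 unfolding S_def by blast
          show "M #>\<^bsub>B\<^esub> b \<notin> (\<lambda>b. M #>\<^bsub>B\<^esub> b) ` K"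
            using not_in_img[OF grpB sK _ sM MS[OF l(1)] _ l(2)] nFB SL l b lists by blast
        qed
        show "\<forall>x\<in>set hs. \<forall>y\<in>set hs. x \<noteq> y \<longrightarrow> N #>\<^bsub>A\<^esub> x \<noteq> N #>\<^bsub>A\<^esub> y"
        proof (intro ballI impI)
          fix x y assume xy: "x \<in> set hs" "y \<in> set hs" "x \<noteq> y"
          then obtain l where l: "l \<in> S" "x \<otimes>\<^bsub>A\<^esub> inv\<^bsub>A\<^esub> y \<notin> FA l" using S3 unfolding S_def by fastforce
          have c: "x \<in> carrier A" "y \<in> carrier A" using xy lists HA by auto
          show "N #>\<^bsub>A\<^esub> x \<noteq> N #>\<^bsub>A\<^esub> y"
            using coset_eq_iff[OF grpA sN c] NS[OF l(1)] l(2) by blast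
        qed
        show "\<forall>x\<in>set ks. \<forall>y\<in>set ks. x \<noteq> y \<longrightarrow> M #>\<^bsub>B\<^esub> x \<noteq> M #>\<^bsub>B\<^esub> y"
        proof (intro ballI impI)
          fix x y assume xy: "x \<in> set ks" "y \<in> set ks" "x \<noteq> y"
          then obtain l where l: "l \<in> S" "x \<otimes>\<^bsub>B\<^esub> inv\<^bsub>B\<^esub> y \<notin> FB l" using S4 unfolding S_def by fastforce
          have c: "x \<in> carrier B" "y \<in> carrier B" using xy lists KB by auto
          show "M #>\<^bsub>B\<^esub> x \<noteq> M #>\<^bsub>B\<^esub> y"
            using coset_eq_iff[OF grpB sM c] MS[OF l(1)] l(2) by blast
        qed
      qed
    qed
  next
    case 2
    define L :: "('a set \<times> 'b set) set" where "L = {(N, M). N \<lhd> A \<and> finite (rcosets\<^bsub>A\<^esub> N)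
       \<and> M \<lhd> B \<and> finite (rcosets\<^bsub>B\<^esub> M) \<and> (\<forall>h\<in>H. h \<in> N \<longleftrightarrow> \<phi> h \<in> M)}"
    have getk: "\<exists>(GA :: 'a set monoid) (GB :: 'b set monoid) fA fB.
        (kernel A GA fA, kernel B GB fB) \<in> L \<and> group GA \<and> group GB
        \<and> fA \<in> hom A GA \<and> fB \<in> hom B GB
        \<and> (\<forall>a\<in>set as. a \<notin> H <#>\<^bsub>A\<^esub> kernel A GA fA)
        \<and> (\<forall>b\<in>set bs. b \<notin> K <#>\<^bsub>B\<^esub> kernel B GB fB)
        \<and> (\<forall>x\<in>set hs. \<forall>y\<in>set hs. x \<noteq> y \<longrightarrow> fA x \<noteq> fA y)
        \<and> (\<forall>x\<in>set ks. \<forall>y\<in>set ks. x \<noteq> y \<longrightarrow> fB x \<noteq> fB y)"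
      if "set as \<subseteq> carrier A - H" "set bs \<subseteq> carrier B - K" "set hs \<subseteq> H" "set ks \<subseteq> K"
      for as bs hs ks
    proof -
      have "set as \<subseteq> carrier A - H \<and> set bs \<subseteq> carrier B - K \<and> set hs \<subseteq> H \<and> set ks \<subseteq> K"
        using that by (intro conjI)
      from 2[rule_format, OF this] show ?thesis
      proof (elim exE conjE)
        fix GA :: "'a set monoid" and GB :: "'b set monoid" and fA fB \<psi>
        assume gA: "group GA" and gB: "group GB" and finA: "finite (carrier GA)" and finB: "finite (carrier GB)"
        and hA: "fA \<in> hom A GA" and imA: "fA ` carrier A = carrier GA"
        and hB: "fB \<in> hom B GB" and imB: "fB ` carrier B = carrier GB"
        and p1: "\<psi> \<in> iso (GA\<lparr>carrier := fA ` H\<rparr>) (GB\<lparr>carrier := fB ` K\<rparr>)"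
        and p2: "\<forall>h\<in>H. \<psi> (fA h) = fB (\<phi> h)"
        and c1: "\<forall>a\<in>set as. fA a \<notin> fA ` H"
        and c2: "\<forall>b\<in>set bs. fB b \<notin> fB ` K"
        and c3: "\<forall>x\<in>set hs. \<forall>y\<in>set hs. x \<noteq> y \<longrightarrow> fA x \<noteq> fA y"
        and c4: "\<forall>x\<in>set ks. \<forall>y\<in>set ks. x \<noteq> y \<longrightarrow> fB x \<noteq> fB y"
      have kA: "kernel A GA fA \<lhd> A" "finite (rcosets\<^bsub>A\<^esub> (kernel A GA fA))"
        using ker_facts[OF grpA gA hA imA finA] by auto
      have kB: "kernel B GB fB \<lhd> B" "finite (rcosets\<^bsub>B\<^esub> (kernel B GB fB))"
        using ker_facts[OF grpB gB hB imB finB] by auto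
      have kD: "\<forall>h\<in>H. h \<in> kernel A GA fA \<longleftrightarrow> \<phi> h \<in> kernel B GB fB"
        using ker_D[OF assms(1-5) gA gB hA hB p1 p2] .
      have inL: "(kernel A GA fA, kernel B GB fB) \<in> L"
        unfolding L_def using kA kB kD by simp
      have d1: "\<forall>a\<in>set as. a \<notin> H <#>\<^bsub>A\<^esub> kernel A GA fA"
      proof
        fix a assume a: "a \<in> set as"
        have ac: "a \<in> carrier A" using a that(1) by blast
        show "a \<notin> H <#>\<^bsub>A\<^esub> kernel A GA fA" using ker_notin_HN[OF grpA gA hA sH ac] c1 a by blast
      qed
      have d2: "\<forall>b\<in>set bs. b \<notin> K <#>\<^bsub>B\<^esub> kernel B GB fB"
      proof
        fix b assume b: "b \<in> set bs"
        have bc: "b \<in> carrier B" using b that(2) by blast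
        show "b \<notin> K <#>\<^bsub>B\<^esub> kernel B GB fB" using ker_notin_HN[OF grpB gB hB sK bc] c2 b by blast
      qed
      show ?thesis
        by (intro exI[where x=GA] exI[where x=GB] exI[where x=fA] exI[where x=fB] conjI inL gA gB hA hB d1 d2 c3 c4)
    qed
    qed
    have kerc: "\<And>G (GA :: 'c monoid) f. group G \<Longrightarrow> group GA \<Longrightarrow> f \<in> hom G GA \<Longrightarrow> kernel G GA f \<subseteq> carrier G"
      unfolding kernel_def by blast
    have e: "\<And>Z. set [] \<subseteq> Z" by simp
    have o1A: "\<one>\<^bsub>A\<^esub> \<in> H" using subgroup.one_closed[OF sH] .
    have o1B: "\<one>\<^bsub>B\<^esub> \<in> K" using subgroup.one_closed[OF sK] .
    have LA: "\<And>l. l \<in> L \<Longrightarrow> fst l \<lhd> A \<and> finite (rcosets\<^bsub>A\<^esub> (fst l))" unfolding L_def by auto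
    have LB: "\<And>l. l \<in> L \<Longrightarrow> snd l \<lhd> B \<and> finite (rcosets\<^bsub>B\<^esub> (snd l))" unfolding L_def by auto
    have filtA: "H_filtration A H L fst"
      unfolding H_filtration_def filtration_def
    proof (intro conjI)
      show "\<forall>l\<in>L. fst l \<lhd> A \<and> finite (rcosets\<^bsub>A\<^esub> (fst l))" using LA by blast
      show "fam_Inter A L fst = {\<one>\<^bsub>A\<^esub>}"
      proof (rule equalityI)
        show "fam_Inter A L fst \<subseteq> {\<one>\<^bsub>A\<^esub>}"
        proof
          fix x assume x: "x \<in> fam_Inter A L fst"
          then have xc: "x \<in> carrier A" and xL: "\<forall>l\<in>L. x \<in> fst l" unfolding fam_Inter_def by blast+
          show "x \<in> {\<one>\<^bsub>A\<^esub>}"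
          proof (rule ccontr)
            assume "x \<notin> {\<one>\<^bsub>A\<^esub>}"
            then have x1: "x \<noteq> \<one>\<^bsub>A\<^esub>" by blast
            show False
            proof (cases "x \<in> H")
              case True
              have "set [x, \<one>\<^bsub>A\<^esub>] \<subseteq> H" using True o1A by simp
              from getk[of "[]" "[]" "[x, \<one>\<^bsub>A\<^esub>]" "[]", OF e e this e] obtain GA :: "'a set monoid" and GB :: "'b set monoid" and fA fB where
                g: "(kernel A GA fA, kernel B GB fB) \<in> L" "group GA" "fA \<in> hom A GA"
                "\<forall>x'\<in>set [x, \<one>\<^bsub>A\<^esub>]. \<forall>y\<in>set [x, \<one>\<^bsub>A\<^esub>]. x' \<noteq> y \<longrightarrow> fA x' \<noteq> fA y"
                by (elim exE conjE) (rule that; (assumption | simp))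
              have "fA x \<noteq> fA \<one>\<^bsub>A\<^esub>" using g(4) x1 by simp
              then have "x \<notin> kernel A GA fA" using ker_notin1[OF grpA g(2) g(3) xc] by blast
              then show False using xL g(1) by force
            next
              case False
              have "set [x] \<subseteq> carrier A - H" using False xc by simp
              from getk[of "[x]" "[]" "[]" "[]", OF this e e e] obtain GA :: "'a set monoid" and GB :: "'b set monoid" and fA fB where
                g: "(kernel A GA fA, kernel B GB fB) \<in> L" "group GA" "fA \<in> hom A GA"
                "x \<notin> H <#>\<^bsub>A\<^esub> kernel A GA fA"
                by (elim exE conjE) (rule that; (assumption | simp))
              have "x \<in> kernel A GA fA" using xL g(1) by force
              then have "x \<in> H <#>\<^bsub>A\<^esub> kernel A GA fA" using N_sub_HN[OF grpA sH kerc[OF grpA g(2,3)]] by blast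
              then show False using g(4) by blast
            qed
          qed
        qed
        show "{\<one>\<^bsub>A\<^esub>} \<subseteq> fam_Inter A L fst"
          unfolding fam_Inter_def using LA normal_imp_subgroup subgroup.one_closed by fastforce
      qed
      show "fam_Inter A L (\<lambda>l. H <#>\<^bsub>A\<^esub> fst l) = H"
      proof (rule equalityI)
        show "fam_Inter A L (\<lambda>l. H <#>\<^bsub>A\<^esub> fst l) \<subseteq> H"
        proof
          fix x assume x: "x \<in> fam_Inter A L (\<lambda>l. H <#>\<^bsub>A\<^esub> fst l)"
          then have xc: "x \<in> carrier A" and xL: "\<forall>l\<in>L. x \<in> H <#>\<^bsub>A\<^esub> fst l" unfolding fam_Inter_def by blast+
          show "x \<in> H"
          proof (rule ccontr)
            assume False: "x \<notin> H"
            have "set [x] \<subseteq> carrier A - H" using False xc by simp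
            from getk[of "[x]" "[]" "[]" "[]", OF this e e e] obtain GA :: "'a set monoid" and GB :: "'b set monoid" and fA fB where
              g: "(kernel A GA fA, kernel B GB fB) \<in> L" "x \<notin> H <#>\<^bsub>A\<^esub> kernel A GA fA"
              by (elim exE conjE) (rule that; (assumption | simp))
            show False using xL g by force
          qed
        qed
        show "H \<subseteq> fam_Inter A L (\<lambda>l. H <#>\<^bsub>A\<^esub> fst l)"
        proof
          fix h assume h: "h \<in> H"
          have "\<forall>l\<in>L. h \<in> H <#>\<^bsub>A\<^esub> fst l"
            using HN_mem[OF grpA sH _ h] LA normal_imp_subgroup by blast
          then show "h \<in> fam_Inter A L (\<lambda>l. H <#>\<^bsub>A\<^esub> fst l)" using HA[OF h] unfolding fam_Inter_def by blast
        qed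
      qed
    qed
    have filtB: "H_filtration B K L snd"
      unfolding H_filtration_def filtration_def
    proof (intro conjI)
      show "\<forall>l\<in>L. snd l \<lhd> B \<and> finite (rcosets\<^bsub>B\<^esub> (snd l))" using LB by blast
      show "fam_Inter B L snd = {\<one>\<^bsub>B\<^esub>}"
      proof (rule equalityI)
        show "fam_Inter B L snd \<subseteq> {\<one>\<^bsub>B\<^esub>}"
        proof
          fix x assume x: "x \<in> fam_Inter B L snd"
          then have xc: "x \<in> carrier B" and xL: "\<forall>l\<in>L. x \<in> snd l" unfolding fam_Inter_def by blast+
          show "x \<in> {\<one>\<^bsub>B\<^esub>}"
          proof (rule ccontr)
            assume "x \<notin> {\<one>\<^bsub>B\<^esub>}"
            then have x1: "x \<noteq> \<one>\<^bsub>B\<^esub>" by blast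
            show False
            proof (cases "x \<in> K")
              case True
              have "set [x, \<one>\<^bsub>B\<^esub>] \<subseteq> K" using True o1B by simp
              from getk[of "[]" "[]" "[]" "[x, \<one>\<^bsub>B\<^esub>]", OF e e e this] obtain GA :: "'a set monoid" and GB :: "'b set monoid" and fA fB where
                g: "(kernel A GA fA, kernel B GB fB) \<in> L" "group GB" "fB \<in> hom B GB"
                "\<forall>x'\<in>set [x, \<one>\<^bsub>B\<^esub>]. \<forall>y\<in>set [x, \<one>\<^bsub>B\<^esub>]. x' \<noteq> y \<longrightarrow> fB x' \<noteq> fB y"
                by (elim exE conjE) (rule that; (assumption | simp))
              have "fB x \<noteq> fB \<one>\<^bsub>B\<^esub>" using g(4) x1 by simp
              then have "x \<notin> kernel B GB fB" using ker_notin1[OF grpB g(2) g(3) xc] by blast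
              then show False using xL g(1) by force
            next
              case False
              have "set [x] \<subseteq> carrier B - K" using False xc by simp
              from getk[of "[]" "[x]" "[]" "[]", OF e this e e] obtain GA :: "'a set monoid" and GB :: "'b set monoid" and fA fB where
                g: "(kernel A GA fA, kernel B GB fB) \<in> L" "group GB" "fB \<in> hom B GB"
                "x \<notin> K <#>\<^bsub>B\<^esub> kernel B GB fB"
                by (elim exE conjE) (rule that; (assumption | simp))
              have "x \<in> kernel B GB fB" using xL g(1) by force
              then have "x \<in> K <#>\<^bsub>B\<^esub> kernel B GB fB" using N_sub_HN[OF grpB sK kerc[OF grpB g(2,3)]] by blast
              then show False using g(4) by blast
            qed
          qed
        qed
        show "{\<one>\<^bsub>B\<^esub>} \<subseteq> fam_Inter B L snd"
          unfolding fam_Inter_def using LB normal_imp_subgroup subgroup.one_closed by fastforce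
      qed
      show "fam_Inter B L (\<lambda>l. K <#>\<^bsub>B\<^esub> snd l) = K"
      proof (rule equalityI)
        show "fam_Inter B L (\<lambda>l. K <#>\<^bsub>B\<^esub> snd l) \<subseteq> K"
        proof
          fix x assume x: "x \<in> fam_Inter B L (\<lambda>l. K <#>\<^bsub>B\<^esub> snd l)"
          then have xc: "x \<in> carrier B" and xL: "\<forall>l\<in>L. x \<in> K <#>\<^bsub>B\<^esub> snd l" unfolding fam_Inter_def by blast+
          show "x \<in> K"
          proof (rule ccontr)
            assume False: "x \<notin> K"
            have "set [x] \<subseteq> carrier B - K" using False xc by simp
            from getk[of "[]" "[x]" "[]" "[]", OF e this e e] obtain GA :: "'a set monoid" and GB :: "'b set monoid" and fA fB where
              g: "(kernel A GA fA, kernel B GB fB) \<in> L" "x \<notin> K <#>\<^bsub>B\<^esub> kernel B GB fB"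
              by (elim exE conjE) (rule that; (assumption | simp))
            show False using xL g by force
          qed
        qed
        show "K \<subseteq> fam_Inter B L (\<lambda>l. K <#>\<^bsub>B\<^esub> snd l)"
        proof
          fix h assume h: "h \<in> K"
          have "\<forall>l\<in>L. h \<in> K <#>\<^bsub>B\<^esub> snd l"
            using HN_mem[OF grpB sK _ h] LB normal_imp_subgroup by blast
          then show "h \<in> fam_Inter B L (\<lambda>l. K <#>\<^bsub>B\<^esub> snd l)" using KB[OF h] unfolding fam_Inter_def by blast
        qed
      qed
    qed
    have compat: "compatible A B H K \<phi> L fst snd"
      unfolding compatible_def
    proof
      fix l assume l: "l \<in> L"
      obtain N M where NM: "l = (N, M)" by (cases l)
      have nN: "N \<lhd> A" and nM: "M \<lhd> B" and D: "\<forall>h\<in>H. h \<in> N \<longleftrightarrow> \<phi> h \<in> M"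
        using l unfolding NM L_def by auto
      have "\<exists>\<psi>. \<psi> \<in> iso ((A\<lparr>carrier := H <#>\<^bsub>A\<^esub> N\<rparr>) Mod N) ((B\<lparr>carrier := K <#>\<^bsub>B\<^esub> M\<rparr>) Mod M)
          \<and> (\<forall>h\<in>H. \<psi> (N #>\<^bsub>A\<^esub> h) = M #>\<^bsub>B\<^esub> \<phi> h)"
        by (rule D_to_C[OF assms(1-5) nN nM D])
           (simp_all add: FactGroup_def set_mult_carrier_upd rcosets_HN[OF grpA sH nN] rcosets_HN[OF grpB sK nM])
      then show "\<exists>\<psi>. \<psi> \<in> iso ((A\<lparr>carrier := H <#>\<^bsub>A\<^esub> fst l\<rparr>) Mod (fst l))
               ((B\<lparr>carrier := K <#>\<^bsub>B\<^esub> snd l\<rparr>) Mod (snd l))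
        \<and> (\<forall>h\<in>H. \<psi> (fst l #>\<^bsub>A\<^esub> h) = snd l #>\<^bsub>B\<^esub> \<phi> h)" unfolding NM by simp
    qed
    show ?case
      by (intro exI[where x=L] exI[where x=fst] exI[where x=snd] conjI filtA filtB compat)
  qed
qed

end
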